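(* Let $r\geq 1$ and $n_1,\ldots,n_r>1$ be integers, let $R=\mathbb{Z}_{n_1}\oplus\cdots\oplus \mathbb{Z}_{n_r}$ be the direct sum of the residue class rings $\mathbb{Z}_{n_1},\ldots,\mathbb{Z}_{n_r}$, let $\mathcal{S}_R$ be the multiplicative semigroup of the ring $R$, and let ${\rm U}(\mathcal{S}_R)$ be the group of units of $\mathcal{S}_R$. Then $${\rm D}({\rm U}(\mathcal{S}_R))+P_2\leq {\rm D}(\mathcal{S}_R)\leq {\rm D}({\rm U}(\mathcal{S}_R))+\delta,$$ where $P_2=\#\{i\in [1,r]: 2 \parallel n_i\}$ (i.e. $2\mid n_i$ but $4\nmid n_i$) and $\delta=\#\{i\in [1,r]: 2\mid n_i\}$.
   Context: For a finite commutative semigroup $\mathcal{S}$ (with operation written $+$), a sequence $T=a_1a_2\cdots a_\ell$ of elements of $\mathcal{S}$ (a finite multiset; order irrelevant) is called reducible if there is a proper subsequence $T'$ of $T$ (possibly empty, a sub-multiset different from $T$) whose sum equals the sum of all terms of $T$; the sum of the empty sequence is the identity element of $\mathcal{S}$ (here $\mathcal{S}$ has an identity). The Davenport constant ${\rm D}(\mathcal{S})$ is the smallest positive integer $\ell$ such that every sequence of elements of $\mathcal{S}$ of length at least $\ell$ is reducible. For a finite abelian group $G$ this coincides with the classical Davenport constant: the smallest $\ell$ such that every sequence of $\ell$ elements of $G$ has a nonempty subsequence summing to the identity. The semigroup $\mathcal{S}_R$ has as its operation the ring multiplication of $R$ (written additively as $+$ in the semigroup), with identity element $(\overline{1},\ldots,\overline{1})$;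 ${\rm U}(\mathcal{S}_R)$ is the set of elements having an inverse under this operation. *)

theory Defs
  imports Main "HOL-Library.Multiset"
begin

text \<open>A finite commutative monoid is given by a carrier S, an operation f
(written additively in the paper) and an identity e.\<close>

definition seq_sum :: "('a \<Rightarrow> 'a \<Rightarrow> 'a) \<Rightarrow> 'a \<Rightarrow> 'a multiset \<Rightarrow> 'a" where
  "seq_sum f e T = fold_mset f e T"

definition reducible :: "('a \<Rightarrow> 'a \<Rightarrow> 'a) \<Rightarrow> 'a \<Rightarrow> 'a multiset \<Rightarrow> bool" where
  "reducible f e T \<longleftrightarrow> (\<exists>T'. T' \<subset># T \<and> seq_sum f e T' = seq_sum f e T)"

definition davenport :: "'a set \<Rightarrow> ('a \<Rightarrow> 'a \<Rightarrow> 'a) \<Rightarrow> 'a \<Rightarrow> nat" where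
  "davenport S f e = (LEAST l. 0 < l \<and>
     (\<forall>T. set_mset T \<subseteq> S \<and> l \<le> size T \<longrightarrow> reducible f e T))"

definition monoid_units :: "'a set \<Rightarrow> ('a \<Rightarrow> 'a \<Rightarrow> 'a) \<Rightarrow> 'a \<Rightarrow> 'a set" where
  "monoid_units S f e = {x \<in> S. \<exists>y \<in> S. f x y = e \<and> f y x = e}"

text \<open>The ring R = Z_{n_0} (+) ... (+) Z_{n_(r-1)}: elements are functions
nat => nat with x i < n i for i < r and x i = 0 for i >= r (canonical
representatives).  S_R is its multiplicative monoid.\<close>
definition SR_carrier :: "nat \<Rightarrow> (nat \<Rightarrow> nat) \<Rightarrow> (nat \<Rightarrow> nat) set" where
  "SR_carrier r n = {x. (\<forall>i<r. x i < n i) \<and> (\<forall>i. r \<le> i \<longrightarrow> x i = 0)}"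

definition SR_mult :: "nat \<Rightarrow> (nat \<Rightarrow> nat) \<Rightarrow> (nat \<Rightarrow> nat) \<Rightarrow> (nat \<Rightarrow> nat) \<Rightarrow> (nat \<Rightarrow> nat)" where
  "SR_mult r n x y = (\<lambda>i. if i < r then (x i * y i) mod n i else 0)"

definition SR_one :: "nat \<Rightarrow> (nat \<Rightarrow> nat) \<Rightarrow> (nat \<Rightarrow> nat)" where
  "SR_one r n = (\<lambda>i. if i < r then 1 mod n i else 0)"

end

theory Submission
  imports Defs "HOL-Number_Theory.Number_Theory"
begin


lemma coprime_by_primes:
  fixes u n :: nat
  assumes "\<And>p. prime p \<Longrightarrow> p dvd n \<Longrightarrow> \<not> p dvd u"
  shows "coprime u n"
proof (rule ccontr)
  assume "\<not> coprime u n"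
  then have "gcd u n \<noteq> 1" using coprime_iff_gcd_eq_1 by blast
  then obtain p where p: "prime p" "p dvd gcd u n" using prime_factor_nat by blast
  then show False using assms[of p] by auto
qed

lemma lift_unit:
  fixes m n v :: nat
  assumes "m dvd n" "0 < n" "coprime v m"
  shows "\<exists>u. coprime u n \<and> [u = v] (mod m)"
proof -
  define Q where "Q = {p. prime p \<and> p dvd n \<and> \<not> p dvd v}"
  have fQ: "finite Q" unfolding Q_def
    using finite_divisors_nat[OF assms(2)] by (rule finite_subset[rotated]) auto
  define c where "c = \<Prod>Q"
  have cdvd: "\<And>p. prime p \<Longrightarrow> p dvd c \<longleftrightarrow> p \<in> Q"
  proof -
    fix p :: nat assume pp: "prime p"
    have "p dvd c \<longleftrightarrow> (\<exists>q\<in>Q. p dvd q)" unfolding c_def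
      using prime_dvd_prod_iff[OF fQ pp, of id] by simp
    also have "\<dots> \<longleftrightarrow> p \<in> Q"
      using pp by (auto simp: Q_def dest: primes_dvd_imp_eq)
    finally show "p dvd c \<longleftrightarrow> p \<in> Q" .
  qed
  define u where "u = v + m * c"
  have "coprime u n"
  proof (rule coprime_by_primes)
    fix p :: nat assume pp: "prime p" and pn: "p dvd n"
    show "\<not> p dvd u"
    proof (cases "p dvd v")
      case True
      then have "\<not> p dvd m" using assms(3) pp
        by (meson coprime_common_divisor not_prime_unit)
      moreover have "\<not> p dvd c" using cdvd[OF pp] True by (simp add: Q_def)
      ultimately have "\<not> p dvd m * c" using pp by (simp add: prime_dvd_mult_iff)
      then show ?thesis using True unfolding u_def by (simp add: dvd_add_right_iff)
    next
      case False
      then have "p dvd c" using cdvd[OF pp] pp pn by (simp add: Q_def)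
      then have "p dvd m * c" by simp
      then show ?thesis using False unfolding u_def by (simp add: dvd_add_left_iff)
    qed
  qed
  moreover have "[u = v] (mod m)" unfolding u_def
    by (simp add: cong_def)
  ultimately show ?thesis by blast
qed

lemma orbit_lemma:
  fixes a b n :: nat
  assumes "0 < n" "gcd a n = gcd b n"
  shows "\<exists>u. coprime u n \<and> [u * a = b] (mod n)"
proof -
  define d where "d = gcd a n"
  have d0: "0 < d" using assms(1) by (simp add: d_def)
  have da: "d dvd a" unfolding d_def by simp
  have db: "d dvd b" unfolding d_def assms(2) by simp
  have dn: "d dvd n" unfolding d_def by simp
  obtain a' where a': "a = d * a'" using da by (rule dvdE)
  obtain b' where b': "b = d * b'" using db by (rule dvdE)
  obtain m where m: "n = d * m" using dn by (rule dvdE)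
  have m0: "0 < m" using m assms(1) by simp
  have "gcd (d * a') (d * m) = d" by (subst a'[symmetric], subst m[symmetric]) (simp add: d_def)
  then have "d * gcd a' m = d" by (simp add: gcd_mult_left)
  then have ca: "coprime a' m" using d0 by (intro coprime_iff_gcd_eq_1[THEN iffD2]) simp
  have "gcd (d * b') (d * m) = d" by (subst b'[symmetric], subst m[symmetric]) (simp add: d_def assms(2))
  then have "d * gcd b' m = d" by (simp add: gcd_mult_left)
  then have cb: "coprime b' m" using d0 by (intro coprime_iff_gcd_eq_1[THEN iffD2]) simp
  obtain w where w: "[a' * w = Suc 0] (mod m)" using cong_solve_coprime_nat[OF ca] by blast
  have "coprime (a' * w) m" using cong_imp_coprime[OF cong_sym[OF w]] by simp
  then have cw: "coprime w m" by simp
  have cv: "coprime (b' * w) m" using cb cw by simp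
  obtain u where u: "coprime u n" "[u = b' * w] (mod m)"
    using lift_unit[OF _ assms(1) cv] m by auto
  have "[u * a' = b' * w * a'] (mod m)" using u(2) by (rule cong_scalar_right)
  moreover have "[b' * w * a' = b' * 1] (mod m)"
    using cong_scalar_left[OF w, of b'] by (simp add: ac_simps)
  ultimately have "[u * a' = b' * 1] (mod m)" by (rule cong_trans)
  then have "(u * a') mod m = b' mod m" by (simp add: cong_def)
  then have "d * ((u * a') mod m) = d * (b' mod m)" by simp
  then have "(d * (u * a')) mod (d * m) = (d * b') mod (d * m)"
    by (simp only: mod_mult_mult1)
  then have "(u * (d * a')) mod (d * m) = (d * b') mod (d * m)"
    by (simp only: mult.left_commute)
  then have "[u * a = b] (mod n)" unfolding cong_def a' b' m .
  with u(1) show ?thesis by blast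
qed

lemma cong_1_add:
  fixes m x :: nat
  assumes "m dvd x"
  shows "[1 + x = 1] (mod m)"
proof -
  have "[x = 0] (mod m)" using assms by (simp add: cong_0_iff)
  then have "[1 + x = 1 + 0] (mod m)" by (intro cong_add) auto
  then show ?thesis by simp
qed

lemma unit_caseA:
  fixes m m' p :: nat
  assumes "m' dvd m" "0 < m'" "prime p" "p dvd m div m'" "p * p dvd m" "0 < m"
  shows "\<exists>v. coprime v m \<and> [v = 1] (mod m') \<and> \<not> [v = 1] (mod m)"
proof -
  obtain e where e: "m = m' * e" using assms(1) by (auto elim: dvdE)
  have ediv: "m div m' = e" using e assms(2) by simp
  obtain f where f: "e = p * f" using assms(4) ediv by (auto elim: dvdE)
  have p2: "2 \<le> p" using assms(3) prime_ge_2_nat by blast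
  have m0: "0 < m" using assms(6) .
  have mp: "m div p = m' * f" using e f p2 by simp
  have mp2: "m = p * (m div p)" using mp e f by simp
  define v where "v = 1 + m div p"
  have "[v = 1] (mod m')" unfolding v_def mp by (rule cong_1_add) simp
  moreover have "coprime v m"
  proof (rule coprime_by_primes)
    fix q :: nat assume q: "prime q" "q dvd m"
    have "q dvd m div p"
    proof (cases "q = p")
      case True
      obtain g where "m = p * p * g" using assms(5) by (auto elim: dvdE)
      then have "m div p = p * g" using p2 by simp
      then show ?thesis using True by simp
    next
      case False
      have "q dvd p * (m div p)" using q mp2 by simp
      then have "q dvd p \<or> q dvd m div p" using q(1) by (simp add: prime_dvd_mult_iff)
      moreover have "\<not> q dvd p" using False q(1) assms(3) primes_dvd_imp_eq by blast
      ultimately show ?thesis by blast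
    qed
    then show "\<not> q dvd v" unfolding v_def using q(1)
      by (metis dvd_add_left_iff not_prime_unit)
  qed
  moreover have "\<not> [v = 1] (mod m)"
  proof
    assume "[v = 1] (mod m)"
    then have "[1 + m div p = 1 + 0] (mod m)" unfolding v_def by simp
    then have "[m div p = 0] (mod m)" using cong_add_lcancel_nat by blast
    then have "m dvd m div p" by (simp add: cong_0_iff)
    moreover have "0 < m div p" using mp2 m0 by (cases "m div p") auto
    moreover have "m div p < m" using m0 p2 by simp
    ultimately show False using dvd_imp_le by fastforce
  qed
  ultimately show ?thesis by blast
qed

lemma unit_caseB:
  fixes m m' p :: nat
  assumes "m' dvd m" "0 < m'" "prime p" "p dvd m div m'" "\<not> p * p dvd m" "odd p"
  shows "\<exists>v. coprime v m \<and> [v = 1] (mod m') \<and> \<not> [v = 1] (mod m)"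
proof -
  obtain e where e: "m = m' * e" using assms(1) by (auto elim: dvdE)
  have ediv: "m div m' = e" using e assms(2) by simp
  obtain f where f: "e = p * f" using assms(4) ediv by (auto elim: dvdE)
  define k where "k = m' * f"
  have mk: "m = p * k" using e f k_def by simp
  have npk: "\<not> p dvd k" using assms(5) mk by auto
  have "\<not> p dvd m'" using npk k_def by auto
  have mdk: "m' dvd k" using k_def by simp
  have ckp: "coprime k p" using prime_imp_coprime[OF assms(3) npk] by (simp add: coprime_commute)
  obtain t where t: "[k * t = Suc 0] (mod p)" using cong_solve_coprime_nat[OF ckp] by blast
  define v where "v = 1 + k * t"
  have "[v = 1] (mod m')" unfolding v_def using mdk by (intro cong_1_add) simp
  moreover have vp: "[v = 2] (mod p)"
  proof -
    have "[1 + k * t = 1 + Suc 0] (mod p)" using t by (intro cong_add cong_refl)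
    then show ?thesis unfolding v_def by (simp add: numeral_2_eq_2)
  qed
  moreover have "coprime v m"
  proof (rule coprime_by_primes)
    fix q :: nat assume q: "prime q" "q dvd m"
    show "\<not> q dvd v"
    proof
      assume qv: "q dvd v"
      have "q dvd p \<or> q dvd k" using q mk by (simp add: prime_dvd_mult_iff)
      then show False
      proof
        assume "q dvd p"
        then have "q = p" using q(1) assms(3) primes_dvd_imp_eq by blast
        then have "p dvd 2" using qv cong_dvd_iff[OF vp] by simp
        then have "p \<le> 2" by (simp add: dvd_imp_le)
        then have "p = 2" using prime_ge_2_nat[OF assms(3)] by linarith
        then show False using assms(6) by simp
      next
        assume "q dvd k"
        then have qkt: "q dvd k * t" by simp
        then have "q dvd 1" using qv dvd_add_left_iff[OF qkt, of 1] unfolding v_def by simp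
        then show False using q(1) by simp
      qed
    qed
  qed
  moreover have "\<not> [v = 1] (mod m)"
  proof
    assume "[v = 1] (mod m)"
    moreover have "p dvd m" using mk by simp
    ultimately have "[v = 1] (mod p)" by (rule cong_dvd_modulus_nat)
    then have "[2 = 1] (mod p)" by (rule cong_trans[OF cong_sym[OF vp]])
    then have "p dvd 1" using cong_altdef_nat[of 1 2 p] by simp
    then show False using assms(3) by simp
  qed
  ultimately show ?thesis by blast
qed

lemma unit_exists_v:
  fixes m m' :: nat
  assumes "m' dvd m" "0 < m'" "m' < m" "\<not> (m = 2 * m' \<and> odd m')"
  shows "\<exists>v. coprime v m \<and> [v = 1] (mod m') \<and> \<not> [v = 1] (mod m)"
proof -
  obtain e where e: "m = m' * e" using assms(1) by (auto elim: dvdE)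
  have ediv: "m div m' = e" using e assms(2) by simp
  have m0: "0 < m" using assms by simp
  have e1: "1 < e" using e assms(2,3) by (cases e) auto
  have AB: "\<exists>v. coprime v m \<and> [v = 1] (mod m') \<and> \<not> [v = 1] (mod m)"
    if "prime p" "p dvd e" "p * p dvd m \<or> odd p" for p
  proof (cases "p * p dvd m")
    case True
    then show ?thesis using unit_caseA[OF assms(1,2) that(1) _ True m0] that(2) ediv by simp
  next
    case False
    then show ?thesis using unit_caseB[OF assms(1,2) that(1) _ False] that ediv by simp
  qed
  obtain p where p: "prime p" "p dvd e" using e1 prime_factor_nat[of e] by auto
  show ?thesis
  proof (cases "p * p dvd m \<or> odd p")
    case True
    then show ?thesis using AB p by blast
  next
    case False
    then have p2: "p = 2" using p(1) prime_odd_nat[of p] prime_ge_2_nat[of p] by force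
    have n4: "\<not> 4 dvd m" using False p2 by simp
    have edm: "e dvd m" using e by simp
    show ?thesis
    proof (cases "e = 2")
      case True
      have "odd m'"
      proof
        assume "even m'"
        then have "4 dvd m" using e True by auto
        then show False using n4 by simp
      qed
      then show ?thesis using assms(4) e True by simp
    next
      case False
      obtain e2 where e2: "e = 2 * e2" using p p2 by (auto elim: dvdE)
      have "e2 \<noteq> 1" using False e2 by simp
      then obtain q where q: "prime q" "q dvd e2" using prime_factor_nat by blast
      have "q \<noteq> 2"
      proof
        assume "q = 2"
        then have "4 dvd e" using q e2 by auto
        then show False using n4 edm dvd_trans by blast
      qed
      then have "odd q" using q(1) prime_odd_nat[of q] prime_ge_2_nat[of q] by force
      moreover have "q dvd e" using q e2 by simp
      ultimately show ?thesis using AB q(1) by blast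
    qed
  qed
qed

lemma unit_exists:
  fixes m m' n :: nat
  assumes "m' dvd m" "0 < m'" "m' < m" "\<not> (m = 2 * m' \<and> odd m')" "m dvd n" "0 < n"
  shows "\<exists>u. coprime u n \<and> [u = 1] (mod m') \<and> \<not> [u = 1] (mod m)"
proof -
  obtain v where v: "coprime v m" "[v = 1] (mod m')" "\<not> [v = 1] (mod m)"
    using unit_exists_v[OF assms(1-4)] by blast
  obtain u where u: "coprime u n" "[u = v] (mod m)" using lift_unit[OF assms(5,6) v(1)] by blast
  have "[u = v] (mod m')" using u(2) assms(1) cong_dvd_modulus_nat by blast
  then have "[u = 1] (mod m')" using v(2) cong_trans by blast
  moreover have "\<not> [u = 1] (mod m)" using u(2) v(3) cong_trans cong_sym by blast
  ultimately show ?thesis using u(1) by blast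
qed

lemma step_trichotomy:
  fixes n a x b :: nat
  assumes n0: "0 < n" and b: "b = (a * x) mod n"
  shows "(\<exists>u. coprime u n \<and> [u * a = b] (mod n))
       \<or> (\<exists>u. coprime u n \<and> [u * b = b] (mod n) \<and> \<not> [u * a = a] (mod n))
       \<or> (even (n div gcd a n) \<and> odd (n div gcd b n))"
proof -
  define d where "d = gcd a n"
  define d' where "d' = gcd b n"
  have d0: "0 < d" "0 < d'" using n0 by (auto simp: d_def d'_def)
  have "d dvd b" unfolding b d_def by (meson dvd_mod dvd_mult2 gcd_dvd1 gcd_dvd2)
  then have dd: "d dvd d'" unfolding d'_def using d_def by simp
  show ?thesis
  proof (cases "d = d'")
    case True
    then show ?thesis using orbit_lemma[OF n0, of a b] by (simp add: d_def d'_def)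
  next
    case False
    obtain k where k: "d' = d * k" using dd by (auto elim: dvdE)
    have k1: "1 < k" using k False d0 by (cases k) auto
    obtain m where m: "n = d * m" unfolding d_def by (meson gcd_dvd2 dvdE)
    obtain m' where m': "n = d' * m'" unfolding d'_def by (meson gcd_dvd2 dvdE)
    have mm: "m = k * m'" using m m' k d0 by (simp add: ac_simps)
    have m'0: "0 < m'" using m' n0 by simp
    have mlt: "m' < m" using mm k1 m'0 by simp
    have mdiv1: "n div d = m" using m d0 by simp
    have mdiv2: "n div d' = m'" using m' d0 by (metis nonzero_mult_div_cancel_left less_not_refl2)
    note mdiv = mdiv1 mdiv2
    show ?thesis
    proof (cases "m = 2 * m' \<and> odd m'")
      case True
      then show ?thesis using mdiv by (simp add: d_def d'_def)
    next
      case False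
      obtain u where u: "coprime u n" "[u = 1] (mod m')" "\<not> [u = 1] (mod m)"
        using unit_exists[OF _ m'0 mlt False _ n0] mm m by auto
      have n1: "n \<noteq> 1" using m mlt m'0 by auto
      have u0: "1 \<le> u"
      proof (rule ccontr)
        assume "\<not> 1 \<le> u" then have "u = 0" by simp
        then show False using u(1) n1 by simp
      qed
      have "m' dvd u - 1" using u(2) u0 by (simp add: cong_altdef_nat)
      moreover have "d' dvd b" unfolding d'_def by simp
      ultimately have "d' * m' dvd (u - 1) * b" by (simp add: mult_dvd_mono mult.commute)
      then have "n dvd u * b - b" using m' by (simp add: diff_mult_distrib)
      then have c1: "[u * b = b] (mod n)" using u0 by (subst cong_altdef_nat) auto
      have c2: "\<not> [u * a = a] (mod n)"
      proof
        assume "[u * a = a] (mod n)"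
        then have "n dvd u * a - a" using u0 by (subst (asm) cong_altdef_nat) auto
        then have "n dvd (u - 1) * a" by (simp add: diff_mult_distrib)
        moreover obtain a' where a': "a = d * a'" unfolding d_def by (meson gcd_dvd1 dvdE)
        ultimately have "d * m dvd d * ((u - 1) * a')" using m by (simp add: ac_simps)
        then have "m dvd (u - 1) * a'" using d0 by simp
        moreover have "coprime a' m"
        proof -
          have "gcd (d * a') (d * m) = d" by (subst a'[symmetric], subst m[symmetric]) (simp add: d_def)
          then have "d * gcd a' m = d" by (simp add: gcd_mult_left)
          then show ?thesis using d0 by (intro coprime_iff_gcd_eq_1[THEN iffD2]) simp
        qed
        ultimately have "m dvd u - 1" by (simp add: coprime_dvd_mult_left_iff coprime_commute)
        then have "[u = 1] (mod m)" using u0 by (simp add: cong_altdef_nat)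
        then show False using u(3) by simp
      qed
      show ?thesis using u(1) c1 c2 by blast
    qed
  qed
qed



lemma sub_image_mset_set:
  assumes "finite K" "M \<subseteq># image_mset w (mset_set K)"
  shows "\<exists>J\<subseteq>K. M = image_mset w (mset_set J)"
  using assms
proof (induction K arbitrary: M rule: finite_induct)
  case empty
  then show ?case by simp
next
  case (insert a K)
  have eq: "image_mset w (mset_set (insert a K)) = add_mset (w a) (image_mset w (mset_set K))"
    using insert by simp
  have sub: "M \<subseteq># add_mset (w a) (image_mset w (mset_set K))" using insert.prems eq by simp
  show ?case
  proof (cases "w a \<in># M")
    case True
    then obtain M' where M': "M = add_mset (w a) M'" using multi_member_split[OF True] by blast
    have "add_mset (w a) M' \<subseteq># add_mset (w a) (image_mset w (mset_set K))"
      using sub M' by simp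
    then have "M' \<subseteq># image_mset w (mset_set K)"
      by (simp only: mset_subset_eq_add_mset_cancel)
    then obtain J where J: "J \<subseteq> K" "M' = image_mset w (mset_set J)"
      using insert.IH by blast
    have fJ: "finite J" using J insert(1) finite_subset by blast
    have "a \<notin> J" using J insert(2) by blast
    then have "M = image_mset w (mset_set (insert a J))" using J fJ M' by simp
    then show ?thesis using J by blast
  next
    case False
    have "M \<subseteq># image_mset w (mset_set K)"
    proof (rule mset_subset_eqI)
      fix x
      have "count M x \<le> count (add_mset (w a) (image_mset w (mset_set K))) x"
        using mset_subset_eq_count[OF sub] .
      moreover have "x = w a \<Longrightarrow> count M x = 0" using False by (simp add: count_eq_zero_iff)
      ultimately show "count M x \<le> count (image_mset w (mset_set K)) x"
        by (cases "x = w a") auto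
    qed
    then show ?thesis using insert.IH by blast
  qed
qed

lemma strict_image_mset_set:
  assumes "finite K" "J \<subset> K"
  shows "image_mset w (mset_set J) \<subset># image_mset w (mset_set K)"
proof -
  have fJ: "finite J" using assms finite_subset by blast
  have "image_mset w (mset_set J) \<subseteq># image_mset w (mset_set K)"
    using assms fJ by (intro image_mset_subseteq_mono) auto
  moreover have "card J < card K" using assms psubset_card_mono by blast
  then have "size (image_mset w (mset_set J)) \<noteq> size (image_mset w (mset_set K))" by simp
  ultimately show ?thesis by (metis subset_mset.le_imp_less_or_eq)
qed

lemma mset_nth_image: "mset xs = image_mset (nth xs) (mset_set {..<length xs})"
proof -
  have "mset xs = mset (map (nth xs) [0..<length xs])" by (simp add: map_nth)
  also have "\<dots> = image_mset (nth xs) (mset_set {0..<length xs})" by simp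
  finally show ?thesis by (simp add: atLeast0LessThan)
qed

locale SR =
  fixes r :: nat and n :: "nat \<Rightarrow> nat"
  assumes n1: "\<forall>i<r. 1 < n i"
begin

abbreviation "smul \<equiv> SR_mult r n"
abbreviation "sone \<equiv> SR_one r n"
abbreviation "CC \<equiv> SR_carrier r n"
abbreviation "GG \<equiv> monoid_units CC smul sone"

definition PS :: "(nat \<Rightarrow> nat) multiset \<Rightarrow> (nat \<Rightarrow> nat)" where
  "PS T = (\<lambda>i. if i < r then (\<Prod>x\<in>#T. x i) mod n i else 0)"

definition PI :: "nat set \<Rightarrow> (nat \<Rightarrow> nat \<Rightarrow> nat) \<Rightarrow> (nat \<Rightarrow> nat)" where
  "PI J w = (\<lambda>i. if i < r then (\<Prod>j\<in>J. w j i) mod n i else 0)"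

lemma n0: "i < r \<Longrightarrow> 0 < n i" using n1 by force

lemma cfc: "comp_fun_commute smul"
proof
  fix x y :: "nat \<Rightarrow> nat"
  show "smul y \<circ> smul x = smul x \<circ> smul y"
    by (rule ext) (auto simp: SR_mult_def mod_mult_right_eq mult.left_commute)
qed

lemma seq_sum_PS: "seq_sum smul sone T = PS T"
proof (induction T)
  case empty
  show ?case by (auto simp: seq_sum_def PS_def SR_one_def)
next
  case (add x T)
  have "seq_sum smul sone (add_mset x T) = smul x (seq_sum smul sone T)"
    unfolding seq_sum_def by (simp add: comp_fun_commute.fold_mset_add_mset[OF cfc])
  also have "\<dots> = PS (add_mset x T)" unfolding add
    by (auto simp: PS_def SR_mult_def mod_mult_right_eq)
  finally show ?case .
qed

lemma red_iff: "reducible smul sone T \<longleftrightarrow> (\<exists>T'. T' \<subset># T \<and> PS T' = PS T)"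
  by (simp add: reducible_def seq_sum_PS)

lemma PS_image: "PS (image_mset w (mset_set J)) = PI J w"
proof -
  have "(\<Prod>x\<in>#image_mset w (mset_set J). x i) = (\<Prod>j\<in>J. w j i)" for i
    by (simp add: prod_unfold_prod_mset multiset.map_comp o_def)
  then show ?thesis unfolding PS_def PI_def by (simp only:)
qed

lemma PI_eq_iff: "PI J w = PI K w \<longleftrightarrow> (\<forall>i<r. [(\<Prod>j\<in>J. w j i) = (\<Prod>j\<in>K. w j i)] (mod n i))"
  by (auto simp: PI_def cong_def fun_eq_iff)

lemma C_eq:
  assumes "x \<in> CC" "y \<in> CC" "\<forall>i<r. [x i = y i] (mod n i)"
  shows "x = y"
proof
  fix i show "x i = y i"
  proof (cases "i < r")
    case True
    then show ?thesis using assms by (auto simp: SR_carrier_def cong_def)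
  next
    case False
    then show ?thesis using assms by (auto simp: SR_carrier_def)
  qed
qed

lemma PI_C: "PI J w \<in> CC"
  using n0 by (auto simp: PI_def SR_carrier_def)

lemma mul_C: "smul x y \<in> CC"
  using n0 by (auto simp: SR_mult_def SR_carrier_def)

lemma smul_comm: "smul x y = smul y x"
  by (auto simp: SR_mult_def fun_eq_iff mult.commute)

lemma G_char: "x \<in> GG \<longleftrightarrow> x \<in> CC \<and> (\<forall>i<r. coprime (x i) (n i))"
proof
  assume x: "x \<in> GG"
  then obtain y where y: "x \<in> CC" "smul x y = sone" by (auto simp: monoid_units_def)
  have "coprime (x i) (n i)" if i: "i < r" for i
  proof -
    have "(x i * y i) mod n i = 1 mod n i" using fun_cong[OF y(2), of i] i
      by (simp add: SR_mult_def SR_one_def)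
    then have h: "[x i * y i = 1] (mod n i)" by (simp add: cong_def)
    have "coprime (x i * y i) (n i)" by (rule cong_imp_coprime[OF cong_sym[OF h]]) simp
    then show ?thesis by simp
  qed
  then show "x \<in> CC \<and> (\<forall>i<r. coprime (x i) (n i))" using y by blast
next
  assume x: "x \<in> CC \<and> (\<forall>i<r. coprime (x i) (n i))"
  have "\<forall>i. \<exists>w. i < r \<longrightarrow> [x i * w = Suc 0] (mod n i)"
    using x cong_solve_coprime_nat by blast
  then obtain w where w: "\<And>i. i < r \<Longrightarrow> [x i * w i = Suc 0] (mod n i)" by metis
  define y where "y = (\<lambda>i. if i < r then w i mod n i else 0)"
  have yC: "y \<in> CC" using n0 by (auto simp: y_def SR_carrier_def)
  have "smul x y = sone"
    using w by (auto simp: fun_eq_iff SR_mult_def SR_one_def y_def cong_def mod_mult_right_eq)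
  moreover have "smul y x = sone"
    using calculation smul_comm by metis
  ultimately show "x \<in> GG" using x yC by (auto simp: monoid_units_def)
qed

lemma finite_C: "finite CC"
proof -
  have "CC \<subseteq> (\<lambda>f i. if i < r then f i else 0) ` (PiE {..<r} (\<lambda>i. {..<n i}))"
  proof
    fix x assume x: "x \<in> CC"
    let ?f = "restrict x {..<r}"
    have "?f \<in> PiE {..<r} (\<lambda>i. {..<n i})" using x by (auto simp: SR_carrier_def)
    moreover have "x = (\<lambda>i. if i < r then ?f i else 0)" using x by (auto simp: SR_carrier_def)
    ultimately show "x \<in> (\<lambda>f i. if i < r then f i else 0) ` (PiE {..<r} (\<lambda>i. {..<n i}))" by blast
  qed
  moreover have "finite (PiE {..<r} (\<lambda>i. {..<n i}))" by (intro finite_PiE) auto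
  ultimately show ?thesis using finite_subset by blast
qed

end


context SR
begin

definition Good :: "(nat \<Rightarrow> nat) set \<Rightarrow> nat \<Rightarrow> bool" where
  "Good X l \<longleftrightarrow> (\<forall>T. set_mset T \<subseteq> X \<and> l \<le> size T \<longrightarrow> reducible smul sone T)"

lemma dav_def: "davenport X smul sone = (LEAST l. 0 < l \<and> Good X l)"
  unfolding davenport_def Good_def ..

lemma red_of_index:
  assumes "finite K" "J \<subset> K" "PI J w = PI K w"
  shows "reducible smul sone (image_mset w (mset_set K))"
  unfolding red_iff
  by (intro exI[of _ "image_mset w (mset_set J)"])
     (simp add: strict_image_mset_set[OF assms(1,2)] PS_image assms(3))

lemma index_of_red:
  assumes "finite K" "reducible smul sone (image_mset w (mset_set K))"
  shows "\<exists>J\<subset>K. PI J w = PI K w"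
proof -
  obtain T' where T': "T' \<subset># image_mset w (mset_set K)" "PS T' = PS (image_mset w (mset_set K))"
    using assms(2) unfolding red_iff by blast
  obtain J where J: "J \<subseteq> K" "T' = image_mset w (mset_set J)"
    using sub_image_mset_set[OF assms(1)] T'(1) by (meson subset_mset.less_imp_le)
  have "J \<noteq> K" using J T'(1) by auto
  then show ?thesis using J T'(2) by (auto simp: PS_image)
qed

lemma prod_split:
  fixes f :: "nat \<Rightarrow> 'b::comm_monoid_mult" and t t' :: nat
  assumes "t \<le> t'"
  shows "(\<Prod>j<t'. f j) = (\<Prod>j<t. f j) * (\<Prod>j\<in>{t..<t'}. f j)"
  using prod.atLeastLessThan_concat[of 0 t t' f] assms by (simp add: atLeast0LessThan)

lemma pigeon:
  assumes "X \<subseteq> CC"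
  shows "Good X (card CC + 1)"
  unfolding Good_def
proof (intro allI impI)
  fix T assume T: "set_mset T \<subseteq> X \<and> card CC + 1 \<le> size T"
  obtain xs where xs: "mset xs = T" using ex_mset by blast
  define z where "z = nth xs"
  define l where "l = length xs"
  have Tz: "T = image_mset z (mset_set {..<l})" using xs mset_nth_image z_def l_def by metis
  have lge: "card CC + 1 \<le> l" using T xs l_def by auto
  define s where "s t = PI {..<t} z" for t
  have "s ` {..l} \<subseteq> CC" using PI_C s_def by auto
  have "\<not> inj_on s {..l}"
  proof
    assume "inj_on s {..l}"
    then have "card (s ` {..l}) = l + 1" by (simp add: card_image)
    moreover have "card (s ` {..l}) \<le> card CC" using \<open>s ` {..l} \<subseteq> CC\<close> finite_C card_mono by blast
    ultimately show False using lge by simp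
  qed
  then obtain a b where ab: "a \<le> l" "b \<le> l" "a \<noteq> b" "s a = s b"
    unfolding inj_on_def by auto
  have "\<exists>a b. a < b \<and> b \<le> l \<and> s a = s b"
  proof (cases "a < b")
    case True then show ?thesis using ab by blast
  next
    case False then show ?thesis using ab by (intro exI[of _ b] exI[of _ a]) auto
  qed
  then obtain a b where ab: "a < b" "b \<le> l" "s a = s b" by blast
  define J where "J = {..<a} \<union> {b..<l}"
  have "J \<subseteq> {..<l}" using ab unfolding J_def by auto
  moreover have "a \<notin> J" using ab unfolding J_def by simp
  moreover have "a \<in> {..<l}" using ab by simp
  ultimately have JK: "J \<subset> {..<l}" by blast
  have "PI J z = PI {..<l} z"
    unfolding PI_eq_iff
  proof (intro allI impI)
    fix i assume i: "i < r"
    have c: "[(\<Prod>j<a. z j i) = (\<Prod>j<b. z j i)] (mod n i)"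
      using fun_cong[OF ab(3), of i] i by (simp add: s_def PI_def cong_def)
    have "(\<Prod>j\<in>J. z j i) = (\<Prod>j<a. z j i) * (\<Prod>j\<in>{b..<l}. z j i)"
      unfolding J_def using ab by (intro prod.union_disjoint) (auto simp: disjoint_iff)
    moreover have "(\<Prod>j<l. z j i) = (\<Prod>j<b. z j i) * (\<Prod>j\<in>{b..<l}. z j i)"
      using prod_split[OF ab(2)] .
    ultimately show "[(\<Prod>j\<in>J. z j i) = (\<Prod>j<l. z j i)] (mod n i)"
      using cong_mult[OF c cong_refl] by simp
  qed
  then show "reducible smul sone T" unfolding Tz by (intro red_of_index[OF _ JK]) auto
qed

lemma dav_props:
  assumes "X \<subseteq> CC"
  shows "Good X (davenport X smul sone) \<and> 0 < davenport X smul sone"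
proof -
  have "0 < (LEAST l. 0 < l \<and> Good X l) \<and> Good X (LEAST l. 0 < l \<and> Good X l)"
    by (rule LeastI[of _ "card CC + 1"]) (use pigeon[OF assms] in auto)
  then show ?thesis unfolding dav_def by simp
qed

lemma dav_le:
  assumes "0 < l" "Good X l"
  shows "davenport X smul sone \<le> l"
  unfolding dav_def by (rule Least_le) (use assms in auto)

lemma irred_lt:
  assumes "X \<subseteq> CC" "set_mset T \<subseteq> X" "\<not> reducible smul sone T"
  shows "size T < davenport X smul sone"
  using dav_props[OF assms(1)] assms(2,3) unfolding Good_def by (meson not_less)

lemma irred_exists:
  assumes "X \<subseteq> CC"
  shows "\<exists>T. set_mset T \<subseteq> X \<and> \<not> reducible smul sone T \<and> davenport X smul sone - 1 \<le> size T"
proof (cases "davenport X smul sone = 1")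
  case True
  have "\<not> reducible smul sone {#}" unfolding red_iff by simp
  then show ?thesis using True by (intro exI[of _ "{#}"]) auto
next
  case False
  then have l: "0 < davenport X smul sone - 1" using dav_props[OF assms] by simp
  have "davenport X smul sone - 1 < davenport X smul sone" using l by simp
  then have "\<not> (0 < davenport X smul sone - 1 \<and> Good X (davenport X smul sone - 1))"
    unfolding dav_def by (rule not_less_Least)
  then show ?thesis using l unfolding Good_def by auto
qed

end

lemma coprime_prod_mset:
  fixes n :: nat
  assumes "\<forall>x\<in>#M. coprime (f x) n"
  shows "coprime (\<Prod>x\<in>#M. f x) n"
  using assms by (induction M) auto

lemma cancel_c:
  fixes m u v :: nat
  assumes m: "odd m" and cu: "coprime u (2 * m)" and cv: "coprime v (2 * m)"
    and h: "[u * ((m + 1) mod (2 * m)) = v * ((m + 1) mod (2 * m))] (mod 2 * m)"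
  shows "[u = v] (mod 2 * m)"
proof -
  have hm: "[u * ((m + 1) mod (2 * m)) = v * ((m + 1) mod (2 * m))] (mod m)"
    using h by (rule cong_modulus_mult_nat[of _ _ m 2, unfolded mult.commute[of m 2]])
  have "[(m + 1) mod (2 * m) = m + 1] (mod m)"
    by (simp add: cong_def mod_mod_cancel)
  moreover have "[m + 1 = 1] (mod m)" using cong_1_add[of m m] by (simp add: add.commute)
  ultimately have c1: "[(m + 1) mod (2 * m) = 1] (mod m)" by (rule cong_trans)
  have "[u * ((m + 1) mod (2 * m)) = u * 1] (mod m)" using c1 by (rule cong_scalar_left)
  moreover have "[v * ((m + 1) mod (2 * m)) = v * 1] (mod m)" using c1 by (rule cong_scalar_left)
  ultimately have um: "[u = v] (mod m)" using hm by (metis cong_sym cong_trans mult_1_right)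
  have "odd u" using cu by auto
  moreover have "odd v" using cv by auto
  ultimately have u2: "[u = v] (mod 2)" by (simp add: cong_def odd_iff_mod_2_eq_one)
  have "coprime 2 m" using m by simp
  then show ?thesis using coprime_cong_mult_nat[OF u2 um] by simp
qed

lemma even_mod_even:
  fixes x n :: nat
  assumes "even x" "even n"
  shows "even (x mod n)"
  using dvd_mod[OF assms(1) assms(2)] .

context SR
begin

lemma GG_sub: "GG \<subseteq> CC" using G_char by blast

lemma prod_image_comp:
  "(\<Prod>x\<in>#image_mset w (mset_set J). x i) = (\<Prod>j\<in>J. w j i)"
  by (simp add: prod_unfold_prod_mset multiset.map_comp o_def)

lemma lower_bound:
  "davenport GG smul sone + card {i. i < r \<and> 2 dvd n i \<and> \<not> 4 dvd n i}
     \<le> davenport CC smul sone"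
proof -
  define I2 where "I2 = {i. i < r \<and> 2 dvd n i \<and> \<not> 4 dvd n i}"
  have fI2: "finite I2" unfolding I2_def by simp
  obtain A where A: "set_mset A \<subseteq> GG" "\<not> reducible smul sone A"
      "davenport GG smul sone - 1 \<le> size A"
    using irred_exists[OF GG_sub] by blast
  define c where "c i = (n i div 2 + 1) mod n i" for i
  define e where "e j = (\<lambda>i. if i < r then (if i = j then c i else 1 mod n i) else 0)" for j
  define E where "E = image_mset e (mset_set I2)"
  define T where "T = A + E"
  have m2: "n i = 2 * (n i div 2)" "odd (n i div 2)" if "i \<in> I2" for i
  proof -
    show "n i = 2 * (n i div 2)" using that by (auto simp: I2_def)
    show "odd (n i div 2)"
    proof
      assume "even (n i div 2)"
      then have "4 dvd n i" using \<open>n i = 2 * (n i div 2)\<close> by auto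
      then show False using that by (simp add: I2_def)
    qed
  qed
  have ceven: "even (c i)" if "i \<in> I2" for i
  proof -
    have "even (n i div 2 + 1)" using m2(2)[OF that] by simp
    moreover have "even (n i)" using that by (simp add: I2_def)
    ultimately show ?thesis unfolding c_def by (rule even_mod_even)
  qed
  have eC: "e j \<in> CC" for j using n0 n1 by (auto simp: e_def c_def SR_carrier_def)
  have eprod: "(\<Prod>k\<in>J. e k i) = (if i \<in> J then c i else 1)" if "i < r" "J \<subseteq> I2" for i J
  proof -
    have fJ: "finite J" using that fI2 finite_subset by blast
    have ni: "1 < n i" using that(1) n1 by blast
    have "(\<Prod>k\<in>J. e k i) = (\<Prod>k\<in>J. if k = i then c i else 1)"
      using that ni by (intro prod.cong) (auto simp: e_def)
    also have "\<dots> = (if i \<in> J then c i else 1)" using fJ by simp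
    finally show ?thesis .
  qed
  have eG: "e j \<notin> GG" if "j \<in> I2" for j
  proof
    assume "e j \<in> GG"
    moreover have jr: "j < r" using that by (simp add: I2_def)
    ultimately have "coprime (e j j) (n j)" using G_char by blast
    then have "coprime (c j) (n j)" using jr by (simp add: e_def)
    moreover have "even (n j)" using that by (simp add: I2_def)
    ultimately show False using ceven[OF that] by auto
  qed
  have Acop: "coprime (\<Prod>x\<in>#B. x i) (n i)" if "B \<subseteq># A" "i < r" for B i
  proof (rule coprime_prod_mset)
    show "\<forall>x\<in>#B. coprime (x i) (n i)"
      using that A(1) G_char by (meson mset_subset_eqD subsetD)
  qed
  have irr: "\<not> reducible smul sone T"
  proof
    assume "reducible smul sone T"
    then obtain T' where T': "T' \<subset># T" "PS T' = PS T" unfolding red_iff by blast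
    define A' where "A' = filter_mset (\<lambda>x. x \<in> GG) T'"
    define E' where "E' = filter_mset (\<lambda>x. x \<notin> GG) T'"
    have TAE: "T' = A' + E'" unfolding A'_def E'_def by (simp add: multiset_partition)
    have fA: "filter_mset (\<lambda>x. x \<in> GG) A = A" using A(1) by (auto simp: filter_mset_eq_conv)
    have fE: "filter_mset (\<lambda>x. x \<in> GG) E = {#}" using eG by (auto simp: E_def fI2)
    have fA2: "filter_mset (\<lambda>x. x \<notin> GG) A = {#}" using A(1) by auto
    have fE2: "filter_mset (\<lambda>x. x \<notin> GG) E = E" using eG by (auto simp: E_def filter_mset_eq_conv fI2)
    have "A' \<subseteq># filter_mset (\<lambda>x. x \<in> GG) T" unfolding A'_def
      using T'(1) by (intro multiset_filter_mono) auto
    then have A'A: "A' \<subseteq># A" using fA fE by (simp add: T_def)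
    have "E' \<subseteq># filter_mset (\<lambda>x. x \<notin> GG) T" unfolding E'_def
      using T'(1) by (intro multiset_filter_mono) auto
    then have "E' \<subseteq># E" using fA2 fE2 by (simp add: T_def)
    then obtain I' where I': "I' \<subseteq> I2" "E' = image_mset e (mset_set I')"
      unfolding E_def using sub_image_mset_set[OF fI2] by blast
    have PSi: "PS (B + image_mset e (mset_set J)) i = ((\<Prod>x\<in>#B. x i) * (if i \<in> J then c i else 1)) mod n i"
      if "i < r" "J \<subseteq> I2" for B J i
      using that by (simp add: PS_def prod_image_comp eprod)
    show False
    proof (cases "I' = I2")
      case False
      then obtain j where j: "j \<in> I2" "j \<notin> I'" using I' by blast
      have jr: "j < r" using j by (simp add: I2_def)
      have "PS T' j = ((\<Prod>x\<in>#A'. x j) * 1) mod n j"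
        using PSi[OF jr I'(1), of A'] j TAE I' by simp
      then have c1: "coprime (PS T' j) (n j)" using Acop[OF A'A jr] n0[OF jr] by simp
      have "PS T j = ((\<Prod>x\<in>#A. x j) * c j) mod n j"
        using PSi[OF jr order_refl, of A] j unfolding T_def E_def by simp
      moreover have "even (n j)" using j by (simp add: I2_def)
      ultimately have "even (PS T j)" using ceven[OF j(1)] even_mod_even by simp
      then have "\<not> coprime (PS T j) (n j)" using \<open>even (n j)\<close> by auto
      then show False using c1 T'(2) by simp
    next
      case True
      then have EE: "E' = E" using I' E_def by simp
      then have A'ne: "A' \<noteq> A" using T'(1) TAE T_def by auto
      have "PS A' = PS A"
      proof
        fix i show "PS A' i = PS A i"
        proof (cases "i < r")
          case False then show ?thesis by (simp add: PS_def)
        next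
          case ir: True
          have eq: "((\<Prod>x\<in>#A'. x i) * (if i \<in> I2 then c i else 1)) mod n i
                  = ((\<Prod>x\<in>#A. x i) * (if i \<in> I2 then c i else 1)) mod n i"
            using PSi[OF ir order_refl, of A'] PSi[OF ir order_refl, of A] T'(2) TAE EE
            unfolding T_def E_def by simp
          show ?thesis
          proof (cases "i \<in> I2")
            case False
            then show ?thesis using eq ir by (simp add: PS_def)
          next
            case iI: True
            let ?m = "n i div 2"
            have h: "[(\<Prod>x\<in>#A'. x i) * ((?m + 1) mod (2 * ?m)) = (\<Prod>x\<in>#A. x i) * ((?m + 1) mod (2 * ?m))] (mod 2 * ?m)"
              using eq iI m2(1)[OF iI, symmetric] unfolding cong_def c_def by simp
            have "[(\<Prod>x\<in>#A'. x i) = (\<Prod>x\<in>#A. x i)] (mod 2 * ?m)"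
              using cancel_c[OF m2(2)[OF iI] _ _ h] Acop[OF A'A ir] Acop[of A i] ir
                m2(1)[OF iI, symmetric] by simp
            then show ?thesis using ir m2(1)[OF iI, symmetric] by (simp add: PS_def cong_def)
          qed
        qed
      qed
      moreover have "A' \<subset># A" using A'A A'ne by (simp add: subset_mset.le_neq_trans)
      ultimately show False using A(2) unfolding red_iff by blast
    qed
  qed
  have TC: "set_mset T \<subseteq> CC" using A(1) GG_sub eC by (auto simp: T_def E_def fI2)
  have "size T < davenport CC smul sone" using irred_lt[OF order_refl TC irr] .
  moreover have "size T = size A + card I2" by (simp add: T_def E_def)
  moreover have "0 < davenport GG smul sone" using dav_props[OF GG_sub] by simp
  ultimately show ?thesis using A(3) unfolding I2_def by linarith
qed

end

lemma stab_prod: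
  fixes F :: "nat \<Rightarrow> nat" and x m :: nat
  assumes "finite W" "\<forall>u\<in>W. [F u * x = x] (mod m)"
  shows "[(\<Prod>u\<in>W. F u) * x = x] (mod m)"
  using assms
proof (induction W rule: finite_induct)
  case empty
  then show ?case by simp
next
  case (insert a W)
  have "[(\<Prod>u\<in>W. F u) * x = x] (mod m)" using insert by simp
  then have "[F a * ((\<Prod>u\<in>W. F u) * x) = F a * x] (mod m)" by (rule cong_scalar_left)
  moreover have "[F a * x = x] (mod m)" using insert by simp
  ultimately have "[F a * ((\<Prod>u\<in>W. F u) * x) = x] (mod m)" by (rule cong_trans)
  then show ?case using insert by (simp add: mult.assoc)
qed

lemma div_dvd_div_nat:
  fixes g1 g2 n :: nat
  assumes "g1 dvd g2" "g2 dvd n"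
  shows "(n div g2) dvd (n div g1)"
proof -
  obtain k where k: "n = g2 * k" using assms(2) by (rule dvdE)
  obtain q where q: "g2 = g1 * q" using assms(1) by (rule dvdE)
  show ?thesis
  proof (cases "g2 = 0")
    case True then show ?thesis using k by simp
  next
    case False
    then have g1: "g1 \<noteq> 0" using q by auto
    have "n div g2 = k" using k False by simp
    moreover have "n div g1 = q * k" using k q g1 by (simp add: mult.assoc)
    ultimately show ?thesis by simp
  qed
qed

lemma gcd_mod_eq: "gcd (a mod n) n = gcd a (n::nat)"
  using gcd_red_nat[of a n] by (simp add: gcd.commute)

context SR
begin

lemma upper_bound:
  "davenport CC smul sone \<le> davenport GG smul sone + card {i. i < r \<and> 2 dvd n i}"
proof (rule dav_le)
  define D where "D = davenport GG smul sone"
  define \<delta> where "\<delta> = card {i. i < r \<and> 2 dvd n i}"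
  have D0: "0 < D" using dav_props[OF GG_sub] by (simp add: D_def)
  show "0 < davenport GG smul sone + card {i. i < r \<and> 2 dvd n i}" using D0 D_def by simp
  show "Good CC (davenport GG smul sone + card {i. i < r \<and> 2 dvd n i})"
    unfolding Good_def
  proof (intro allI impI)
    fix T assume T: "set_mset T \<subseteq> CC \<and> davenport GG smul sone + card {i. i < r \<and> 2 dvd n i} \<le> size T"
    show "reducible smul sone T"
    proof (rule ccontr)
      assume nred: "\<not> reducible smul sone T"
      obtain xs where xs: "mset xs = T" using ex_mset by blast
      define z where "z = nth xs"
      define l where "l = length xs"
      define K where "K = {..<l}"
      have fK: "finite K" by (simp add: K_def)
      have Tz: "T = image_mset z (mset_set K)" using xs mset_nth_image z_def l_def K_def by metis
      have lge: "D + \<delta> \<le> l" using T xs l_def D_def \<delta>_def by auto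
      have irr: "PI J z \<noteq> PI K z" if "J \<subset> K" for J
        using red_of_index[OF fK that] nred Tz by blast
      define X where "X t i = (\<Prod>j<t. z j i)" for t i
      have XSuc: "X (Suc t) i = X t i * z t i" for t i by (simp add: X_def)
      define stab where "stab h t \<longleftrightarrow> (\<forall>i<r. [h i * X t i = X t i] (mod n i))" for h t
      have mono: "stab h t'" if "stab h t" "t \<le> t'" for h t t'
        unfolding stab_def
      proof (intro allI impI)
        fix i assume i: "i < r"
        have "[h i * X t i * (\<Prod>j\<in>{t..<t'}. z j i) = X t i * (\<Prod>j\<in>{t..<t'}. z j i)] (mod n i)"
          using that(1) i unfolding stab_def by (intro cong_mult cong_refl) auto
        then show "[h i * X t' i = X t' i] (mod n i)"
          unfolding X_def prod_split[OF that(2)] by (simp add: mult.assoc)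
      qed
      define P where "P = {t \<in> K. \<exists>g\<in>GG. \<forall>i<r. [g i * X t i = X (Suc t) i] (mod n i)}"
      define Ch where "Ch = {t \<in> K. t \<notin> P \<and> (\<exists>h\<in>GG. stab h (Suc t) \<and> \<not> stab h t)}"
      define Bad where "Bad = K - P - Ch"
      define gg where "gg t = (SOME g. g \<in> GG \<and> (\<forall>i<r. [g i * X t i = X (Suc t) i] (mod n i)))" for t
      define hh where "hh t = (SOME h. h \<in> GG \<and> stab h (Suc t) \<and> \<not> stab h t)" for t
      have gg: "gg t \<in> GG" "\<forall>i<r. [gg t i * X t i = X (Suc t) i] (mod n i)" if "t \<in> P" for t
      proof -
        have "\<exists>g. g \<in> GG \<and> (\<forall>i<r. [g i * X t i = X (Suc t) i] (mod n i))" using that P_def by blast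
        from someI_ex[OF this] show "gg t \<in> GG" "\<forall>i<r. [gg t i * X t i = X (Suc t) i] (mod n i)"
          unfolding gg_def by blast+
      qed
      have hh: "hh t \<in> GG" "stab (hh t) (Suc t)" "\<not> stab (hh t) t" if "t \<in> Ch" for t
      proof -
        have "\<exists>h. h \<in> GG \<and> stab h (Suc t) \<and> \<not> stab h t" using that Ch_def by blast
        from someI_ex[OF this] show "hh t \<in> GG" "stab (hh t) (Suc t)" "\<not> stab (hh t) t"
          unfolding hh_def by blast+
      qed
      have PK: "P \<subseteq> K" and ChK: "Ch \<subseteq> K" and PCh: "P \<inter> Ch = {}"
        by (auto simp: P_def Ch_def)
      have fP: "finite P" using PK fK finite_subset by blast
      have fCh: "finite Ch" using ChK fK finite_subset by blast
      have gcop: "coprime (gg t i) (n i)" if "t \<in> P" "i < r" for t i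
        using gg(1)[OF that(1)] that(2) G_char by blast
      have hcop: "coprime (hh t i) (n i)" if "t \<in> Ch" "i < r" for t i
        using hh(1)[OF that(1)] that(2) G_char by blast
      have claimC: "\<not> (\<forall>i<r. [(\<Prod>j\<in>J. gg j i) * X l i = X l i] (mod n i))"
        if J: "J \<subseteq> P" "J \<noteq> {}" for J
      proof
        assume st: "\<forall>i<r. [(\<Prod>j\<in>J. gg j i) * X l i = X l i] (mod n i)"
        have inv: "\<forall>i<r. [(\<Prod>j\<in>{..<t} - J. z j i) * (\<Prod>j\<in>J \<inter> {..<t}. gg j i) = X t i] (mod n i)"
          if "t \<le> l" for t
          using that
        proof (induction t)
          case 0
          then show ?case by (simp add: X_def)
        next
          case (Suc t)
          show ?case
          proof (intro allI impI)
            fix i assume i: "i < r"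
            have IH: "[(\<Prod>j\<in>{..<t} - J. z j i) * (\<Prod>j\<in>J \<inter> {..<t}. gg j i) = X t i] (mod n i)"
              using Suc i by simp
            show "[(\<Prod>j\<in>{..<Suc t} - J. z j i) * (\<Prod>j\<in>J \<inter> {..<Suc t}. gg j i) = X (Suc t) i] (mod n i)"
            proof (cases "t \<in> J")
              case True
              have e1: "{..<Suc t} - J = {..<t} - J" using True by (auto simp: less_Suc_eq)
              have e2: "J \<inter> {..<Suc t} = insert t (J \<inter> {..<t})" using True by (auto simp: less_Suc_eq)
              have "(\<Prod>j\<in>J \<inter> {..<Suc t}. gg j i) = gg t i * (\<Prod>j\<in>J \<inter> {..<t}. gg j i)"
                unfolding e2 by (simp add: prod.insert)
              then have "(\<Prod>j\<in>{..<Suc t} - J. z j i) * (\<Prod>j\<in>J \<inter> {..<Suc t}. gg j i)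
                  = gg t i * ((\<Prod>j\<in>{..<t} - J. z j i) * (\<Prod>j\<in>J \<inter> {..<t}. gg j i))"
                unfolding e1 by (simp add: mult.left_commute)
              moreover have "[gg t i * ((\<Prod>j\<in>{..<t} - J. z j i) * (\<Prod>j\<in>J \<inter> {..<t}. gg j i)) = gg t i * X t i] (mod n i)"
                using IH by (rule cong_scalar_left)
              moreover have "[gg t i * X t i = X (Suc t) i] (mod n i)"
                using gg(2)[of t] True J(1) i by blast
              ultimately show ?thesis using cong_trans by metis
            next
              case False
              have e1: "{..<Suc t} - J = insert t ({..<t} - J)" using False by (auto simp: less_Suc_eq)
              have e2: "J \<inter> {..<Suc t} = J \<inter> {..<t}" using False by (auto simp: less_Suc_eq)
              have "(\<Prod>j\<in>{..<Suc t} - J. z j i) * (\<Prod>j\<in>J \<inter> {..<Suc t}. gg j i)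
                  = ((\<Prod>j\<in>{..<t} - J. z j i) * (\<Prod>j\<in>J \<inter> {..<t}. gg j i)) * z t i"
                unfolding e1 e2 by (simp add: prod.insert mult.commute mult.left_commute)
              moreover have "[((\<Prod>j\<in>{..<t} - J. z j i) * (\<Prod>j\<in>J \<inter> {..<t}. gg j i)) * z t i = X t i * z t i] (mod n i)"
                using IH by (rule cong_scalar_right)
              ultimately show ?thesis using XSuc by simp
            qed
          qed
        qed
        have JK: "J \<subseteq> K" using J PK by blast
        have "PI (K - J) z = PI K z"
          unfolding PI_eq_iff
        proof (intro allI impI)
          fix i assume i: "i < r"
          have a1: "[(\<Prod>j\<in>K - J. z j i) * (\<Prod>j\<in>J. gg j i) = X l i] (mod n i)"
            using inv[OF order_refl] i JK unfolding K_def by (simp add: Int_absorb2)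
          have gc: "coprime (\<Prod>j\<in>J. gg j i) (n i)"
            using gcop J(1) i by (intro prod_coprime_left) blast
          have "[(\<Prod>j\<in>K - J. z j i) * (\<Prod>j\<in>J. gg j i) = X l i * (\<Prod>j\<in>J. gg j i)] (mod n i)"
            using a1 st i by (metis cong_sym cong_trans mult.commute)
          then have "[(\<Prod>j\<in>K - J. z j i) = X l i] (mod n i)"
            using cong_mult_rcancel_nat[OF gc] by blast
          then show "[(\<Prod>j\<in>K - J. z j i) = (\<Prod>j\<in>K. z j i)] (mod n i)"
            by (simp add: X_def K_def)
        qed
        moreover have "K - J \<subset> K" using J JK by blast
        ultimately show False using irr by blast
      qed
      define y where "y t = (if t \<in> P then gg t else hh t)" for t
      define Q where "Q = P \<union> Ch"
      have fQ: "finite Q" using fP fCh Q_def by simp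
      have yG: "y t \<in> GG" if "t \<in> Q" for t
        using that gg(1) hh(1) by (auto simp: y_def Q_def)
      have ycop: "coprime (y t i) (n i)" if "t \<in> Q" "i < r" for t i
        using yG[OF that(1)] that(2) G_char by blast
      have Yirr: "\<not> reducible smul sone (image_mset y (mset_set Q))"
      proof
        assume "reducible smul sone (image_mset y (mset_set Q))"
        then obtain J' where J': "J' \<subset> Q" "PI J' y = PI Q y" using index_of_red[OF fQ] by blast
        define W where "W = Q - J'"
        have fW: "finite W" using fQ W_def by simp
        have Wne: "W \<noteq> {}" using J' W_def by blast
        have W1: "[(\<Prod>u\<in>W. y u i) = 1] (mod n i)" if i: "i < r" for i
        proof -
          have "(\<Prod>u\<in>Q. y u i) = (\<Prod>u\<in>J'. y u i) * (\<Prod>u\<in>W. y u i)"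
            unfolding W_def using prod.subset_diff[of J' Q "\<lambda>u. y u i"] J'(1) fQ by (auto simp: mult.commute)
          moreover have "[(\<Prod>u\<in>J'. y u i) = (\<Prod>u\<in>Q. y u i)] (mod n i)"
            using J'(2) i unfolding PI_eq_iff by blast
          ultimately have a: "[(\<Prod>u\<in>J'. y u i) * (\<Prod>u\<in>W. y u i) = (\<Prod>u\<in>J'. y u i) * 1] (mod n i)"
            by (simp add: cong_sym_eq)
          have "coprime (\<Prod>u\<in>J'. y u i) (n i)"
            using ycop J'(1) i by (intro prod_coprime_left) blast
          from cong_mult_lcancel_nat[OF this, THEN iffD1, OF a] show ?thesis .
        qed
        define WP where "WP = W \<inter> P"
        define WC where "WC = W \<inter> Ch"
        have Wsplit: "W = WP \<union> WC" "WP \<inter> WC = {}" using PCh by (auto simp: WP_def WC_def W_def Q_def)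
        have fWP: "finite WP" "finite WC" using fW by (auto simp: WP_def WC_def)
        have prodW: "(\<Prod>u\<in>W. y u i) = (\<Prod>u\<in>WP. gg u i) * (\<Prod>u\<in>WC. hh u i)" for i
        proof -
          have "(\<Prod>u\<in>W. y u i) = (\<Prod>u\<in>WP. y u i) * (\<Prod>u\<in>WC. y u i)"
            using Wsplit fWP by (simp add: prod.union_disjoint)
          moreover have "(\<Prod>u\<in>WP. y u i) = (\<Prod>u\<in>WP. gg u i)"
            by (intro prod.cong) (auto simp: y_def WP_def)
          moreover have "(\<Prod>u\<in>WC. y u i) = (\<Prod>u\<in>WC. hh u i)"
            using PCh by (intro prod.cong) (auto simp: y_def WC_def)
          ultimately show ?thesis by simp
        qed
        have stabC: "[(\<Prod>u\<in>V. hh u i) * X t i = X t i] (mod n i)"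
          if "V \<subseteq> Ch" "\<forall>u\<in>V. Suc u \<le> t" "i < r" for V t i
        proof (rule stab_prod)
          show "finite V" using that(1) fCh finite_subset by blast
          show "\<forall>u\<in>V. [hh u i * X t i = X t i] (mod n i)"
          proof
            fix u assume u: "u \<in> V"
            have "stab (hh u) t" using mono[OF hh(2)] that u by blast
            then show "[hh u i * X t i = X t i] (mod n i)" using that(3) stab_def by blast
          qed
        qed
        have WCK: "\<forall>u\<in>WC. Suc u \<le> l" using ChK by (auto simp: WC_def K_def)
        have "WP = {}"
        proof (rule ccontr)
          assume WPne: "WP \<noteq> {}"
          have "\<forall>i<r. [(\<Prod>j\<in>WP. gg j i) * X l i = X l i] (mod n i)"
          proof (intro allI impI)
            fix i assume i: "i < r"
            have sC: "[(\<Prod>u\<in>WC. hh u i) * X l i = X l i] (mod n i)"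
              using stabC[of WC l i] WCK i by (auto simp: WC_def)
            have a: "[(\<Prod>j\<in>WP. gg j i) * ((\<Prod>u\<in>WC. hh u i) * X l i) = (\<Prod>j\<in>WP. gg j i) * X l i] (mod n i)"
              using sC by (rule cong_scalar_left)
            have b: "[(\<Prod>j\<in>WP. gg j i) * ((\<Prod>u\<in>WC. hh u i) * X l i) = 1 * X l i] (mod n i)"
              using cong_scalar_right[OF W1[OF i], of "X l i"] prodW[of i] by (simp add: mult.assoc)
            show "[(\<Prod>j\<in>WP. gg j i) * X l i = X l i] (mod n i)"
              using cong_trans[OF cong_sym[OF a] b] by simp
          qed
          moreover have "WP \<subseteq> P" by (auto simp: WP_def)
          ultimately show False using claimC WPne by blast
        qed
        then have WC: "W = WC" "WC \<noteq> {}" using Wsplit Wne by auto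
        define t where "t = Max WC"
        have tW: "t \<in> WC" using WC fWP Max_in t_def by blast
        have tCh: "t \<in> Ch" using tW by (simp add: WC_def)
        have "stab (hh t) t"
          unfolding stab_def
        proof (intro allI impI)
          fix i assume i: "i < r"
          have lt: "\<forall>u\<in>WC - {t}. Suc u \<le> t"
          proof
            fix u assume u: "u \<in> WC - {t}"
            have "u \<le> t" unfolding t_def using u fWP(2) by (intro Max_ge) auto
            moreover have "u \<noteq> t" using u by blast
            ultimately show "Suc u \<le> t" by simp
          qed
          have R: "[(\<Prod>u\<in>WC - {t}. hh u i) * X t i = X t i] (mod n i)"
            using stabC[OF _ lt i] by (auto simp: WC_def)
          have pr: "(\<Prod>u\<in>WC. hh u i) = hh t i * (\<Prod>u\<in>WC - {t}. hh u i)"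
            using tW fWP by (simp add: prod.remove)
          have "[(\<Prod>u\<in>WC. hh u i) = 1] (mod n i)"
            using W1[OF i] prodW[of i] \<open>WP = {}\<close> WC by simp
          then have "[(\<Prod>u\<in>WC. hh u i) * X t i = 1 * X t i] (mod n i)" by (rule cong_scalar_right)
          then have b: "[hh t i * ((\<Prod>u\<in>WC - {t}. hh u i) * X t i) = 1 * X t i] (mod n i)"
            using pr by (simp add: mult.assoc)
          have a: "[hh t i * ((\<Prod>u\<in>WC - {t}. hh u i) * X t i) = hh t i * X t i] (mod n i)"
            using R by (rule cong_scalar_left)
          show "[hh t i * X t i = X t i] (mod n i)"
            using cong_trans[OF cong_sym[OF a] b] by simp
        qed
        then show False using hh(3)[OF tCh] by blast
      qed
      have QG: "set_mset (image_mset y (mset_set Q)) \<subseteq> GG" using yG fQ by auto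
      have cardQ: "card Q < D"
        using irred_lt[OF GG_sub QG Yirr] fQ by (simp add: D_def)
      define Two where "Two = {i. i < r \<and> 2 dvd n i}"
      have badi: "\<exists>i<r. even (n i div gcd (X t i) (n i)) \<and> odd (n i div gcd (X (Suc t) i) (n i))"
        if tB: "t \<in> Bad" for t
      proof (rule ccontr)
        assume nb: "\<not> (\<exists>i<r. even (n i div gcd (X t i) (n i)) \<and> odd (n i div gcd (X (Suc t) i) (n i)))"
        have tK: "t \<in> K" "t \<notin> P" "t \<notin> Ch" using tB Bad_def by auto
        have tri: "(\<exists>u. coprime u (n i) \<and> [u * X t i = X (Suc t) i] (mod n i))
          \<or> (\<exists>u. coprime u (n i) \<and> [u * X (Suc t) i = X (Suc t) i] (mod n i) \<and> \<not> [u * X t i = X t i] (mod n i))"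
          if i: "i < r" for i
        proof -
          have b: "X (Suc t) i mod n i = ((X t i mod n i) * z t i) mod n i"
            by (simp add: XSuc mod_mult_left_eq)
          have "\<not> (even (n i div gcd (X t i mod n i) (n i)) \<and> odd (n i div gcd (X (Suc t) i mod n i) (n i)))"
            using nb i by (simp add: gcd_mod_eq)
          then have "(\<exists>u. coprime u (n i) \<and> [u * (X t i mod n i) = X (Suc t) i mod n i] (mod n i))
             \<or> (\<exists>u. coprime u (n i) \<and> [u * (X (Suc t) i mod n i) = X (Suc t) i mod n i] (mod n i)
                   \<and> \<not> [u * (X t i mod n i) = X t i mod n i] (mod n i))"
            using step_trichotomy[OF n0[OF i] b] by blast
          then show ?thesis by (simp add: cong_def mod_mult_right_eq)
        qed
        show False
        proof (cases "\<exists>i<r. \<exists>u. coprime u (n i) \<and> [u * X (Suc t) i = X (Suc t) i] (mod n i) \<and> \<not> [u * X t i = X t i] (mod n i)")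
          case True
          then obtain i u where iu: "i < r" "coprime u (n i)" "[u * X (Suc t) i = X (Suc t) i] (mod n i)"
              "\<not> [u * X t i = X t i] (mod n i)" by blast
          define h where "h = (\<lambda>k. if k < r then (if k = i then u mod n i else 1 mod n k) else 0)"
          have hC: "h \<in> CC" using n0 n1 by (auto simp: h_def SR_carrier_def)
          have "coprime (h k) (n k)" if k: "k < r" for k
          proof (cases "k = i")
            case True then show ?thesis using iu(1,2) n0[OF k] by (simp add: h_def)
          next
            case False then show ?thesis using k n1 by (simp add: h_def)
          qed
          then have hG: "h \<in> GG" using hC G_char by blast
          have hk: "[h k * x = x] (mod n k)" if "k < r" "k \<noteq> i" for k x
            using that n1 by (simp add: h_def)
          have hi: "[h i * x = u * x] (mod n i)" for x using iu(1) by (simp add: h_def cong_def mod_mult_left_eq)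
          have "stab h (Suc t)" unfolding stab_def
          proof (intro allI impI)
            fix k assume k: "k < r"
            show "[h k * X (Suc t) k = X (Suc t) k] (mod n k)"
            proof (cases "k = i")
              case True then show ?thesis using cong_trans[OF hi iu(3)] by simp
            next
              case False then show ?thesis using hk k by simp
            qed
          qed
          moreover have "\<not> stab h t"
          proof
            assume "stab h t"
            then have "[h i * X t i = X t i] (mod n i)" using iu(1) stab_def by blast
            then have "[u * X t i = X t i] (mod n i)" using cong_trans[OF cong_sym[OF hi]] by blast
            then show False using iu(4) by blast
          qed
          ultimately have "t \<in> Ch" using tK hG Ch_def by blast
          then show False using tK by blast
        next
          case False
          then have "\<forall>i. \<exists>u. i < r \<longrightarrow> coprime u (n i) \<and> [u * X t i = X (Suc t) i] (mod n i)" using tri by blast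
          then obtain u where u: "\<And>i. i < r \<Longrightarrow> coprime (u i) (n i) \<and> [u i * X t i = X (Suc t) i] (mod n i)"
            by metis
          define g where "g = (\<lambda>k. if k < r then u k mod n k else 0)"
          have gC: "g \<in> CC" using n0 by (auto simp: g_def SR_carrier_def)
          have "coprime (g k) (n k)" if k: "k < r" for k
            using u[OF k] n0[OF k] k by (simp add: g_def)
          then have gG: "g \<in> GG" using gC G_char by blast
          have "\<forall>i<r. [g i * X t i = X (Suc t) i] (mod n i)"
            using u by (auto simp: g_def cong_def mod_mult_left_eq)
          then have "t \<in> P" using tK gG P_def by blast
          then show False using tK by blast
        qed
      qed
      define fl where "fl t = (SOME i. i < r \<and> even (n i div gcd (X t i) (n i)) \<and> odd (n i div gcd (X (Suc t) i) (n i)))" for t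
      have fl: "fl t < r \<and> even (n (fl t) div gcd (X t (fl t)) (n (fl t))) \<and> odd (n (fl t) div gcd (X (Suc t) (fl t)) (n (fl t)))"
        if "t \<in> Bad" for t
        using someI_ex[OF badi[OF that, unfolded Bex_def]] unfolding fl_def by blast
      have flTwo: "fl t \<in> Two" if tB: "t \<in> Bad" for t
      proof -
        define i where "i = fl t"
        define g where "g = gcd (X t i) (n i)"
        have "g dvd n i" by (simp add: g_def)
        then have "n i = (n i div g) * g" by simp
        then have "(n i div g) dvd n i" by (metis dvd_triv_left)
        moreover have "even (n i div g)" using fl[OF tB] by (simp add: g_def i_def)
        ultimately have "even (n i)" using dvd_trans by blast
        then show ?thesis using fl[OF tB] by (simp add: Two_def i_def)
      qed
      have flinj: "fl t1 \<noteq> fl t2" if "t1 \<in> Bad" "t2 \<in> Bad" "t1 < t2" for t1 t2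
      proof
        assume eq: "fl t1 = fl t2"
        define i where "i = fl t2"
        have "X t2 i = X (Suc t1) i * (\<Prod>j\<in>{Suc t1..<t2}. z j i)"
          unfolding X_def using prod_split[of "Suc t1" t2] that(3) by simp
        then have "X (Suc t1) i dvd X t2 i" by simp
        then have g12: "gcd (X (Suc t1) i) (n i) dvd gcd (X t2 i) (n i)"
          by (meson dvd_trans gcd_dvd1 gcd_dvd2 gcd_greatest)
        have "(n i div gcd (X t2 i) (n i)) dvd (n i div gcd (X (Suc t1) i) (n i))"
          using div_dvd_div_nat[OF g12] by simp
        moreover have "odd (n i div gcd (X (Suc t1) i) (n i))" using fl[OF that(1)] eq by (simp add: i_def)
        moreover have "even (n i div gcd (X t2 i) (n i))" using fl[OF that(2)] by (simp add: i_def)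
        ultimately show False using dvd_trans by blast
      qed
      have "inj_on fl Bad"
      proof (rule inj_onI)
        fix t1 t2 assume t: "t1 \<in> Bad" "t2 \<in> Bad" "fl t1 = fl t2"
        show "t1 = t2"
        proof (rule ccontr)
          assume "t1 \<noteq> t2"
          then have "t1 < t2 \<or> t2 < t1" by arith
          then show False using flinj t by metis
        qed
      qed
      moreover have "fl ` Bad \<subseteq> Two" using flTwo by blast
      moreover have "finite Two" by (simp add: Two_def)
      ultimately have cardBad: "card Bad \<le> \<delta>" unfolding \<delta>_def Two_def[symmetric]
        using card_inj_on_le by blast
      have QK: "Q \<subseteq> K" using PK ChK Q_def by blast
      have "Bad = K - Q" by (auto simp: Bad_def Q_def)
      then have "card Bad = card K - card Q" using QK fQ by (simp add: card_Diff_subset)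
      moreover have "card Q \<le> card K" using QK fK card_mono by blast
      moreover have "card K = l" by (simp add: K_def)
      ultimately show False using cardQ cardBad lge by linarith
    qed
  qed
qed

end

theorem theorem1p1:
  fixes r :: nat and n :: "nat \<Rightarrow> nat"
  assumes "1 \<le> r"
    and "\<forall>i<r. 1 < n i"
  shows "davenport (monoid_units (SR_carrier r n) (SR_mult r n) (SR_one r n)) (SR_mult r n) (SR_one r n)
           + card {i. i < r \<and> 2 dvd n i \<and> \<not> 4 dvd n i}
         \<le> davenport (SR_carrier r n) (SR_mult r n) (SR_one r n)
       \<and> davenport (SR_carrier r n) (SR_mult r n) (SR_one r n)
         \<le> davenport (monoid_units (SR_carrier r n) (SR_mult r n) (SR_one r n)) (SR_mult r n) (SR_one r n)
           + card {i. i < r \<and> 2 dvd n i}"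
proof -
  interpret SR r n using assms(2) by unfold_locales
  show ?thesis using lower_bound upper_bound by blast
qed

end
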